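(* Let $\rho$ be a probability distribution on $\{1,2,\dots\}$ with finite mean and $\rho_1+\rho_2>0$, and let $\{\Lambda_t\}_{t\ge0}$ be the Poisson($\rho$) hypergraph process on $V=\{1,\dots,N\}$ defined on $(\Omega,\mathcal F,\mathbb P)$. Fix $t>0$ and let $V^\star_t$ be the set of identifiable vertices of $\Lambda_t$. (i) For any collection of non-negative integers $\{k_A: A\subset V\}$, setting $p(S)=\mathbb P\big(\bigcap_{A:|A\setminus S|>1}\{\Lambda_t(A)=k_A\}\big)$ for $S\subset V$, we have $$\mathbb P\Big(\bigcap_{A:|A\setminus V^\star_t|>1}\{\Lambda_t(A)=k_A\}\,\Big|\,\mathcal F_{V^\star_t}\Big)=p(V^\star_t).$$ (ii) For $S\subset V$ with $|S|=m$, on the event $\{V^\star_t=S\}$, the conditional distribution given $\mathcal F_{V^\star_t}$ of the random hypergraph $\Lambda^S_t$ on $V\setminus S$ (restricted to nonempty subsets $A\subset V\setminus S$) is that of a Poisson($\beta$) random hypergraph on $N-m$ vertices with $\beta_1=0$ and $$\beta_j=\frac{t}{1-m/N}\binom{N-m}{j}\sum_{i\ge0}\rho_{i+j}\frac{\binom{m}{i}}{\binom{N}{j+i}},\quad j\ge2.$$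
   Context: A hypergraph on $V$ is a map $\Lambda:2^V\to\{0,1,2,\dots\}$. For $S\subset V$, $\Lambda^S(A)=\sum_{B\supset A,\,B\setminus S=A}\Lambda(B)$, $A\subset V\setminus S$. Hypergraph collapse: while some vertex $v$ has $\Lambda(\{v\})\ge1$, choose one, replace $V$ by $V\setminus\{v\}$ and $\Lambda$ by $\Lambda^{\{v\}}$; the removed vertices are identifiable. Poisson($\rho$) hypergraph process: for each $A\subset V$, $\{\Lambda_t(A)\}_{t\ge0}$ is a Poisson process of rate $N\rho_{|A|}/\binom{N}{|A|}$, independent over $A$. A Poisson($\beta$) random hypergraph on $n$ vertices: the $\Lambda(A)$ are independent Poisson with mean $n\beta_{|A|}/\binom{n}{|A|}$. $\sigma$-fields: for $S\subset V$, $\mathcal F^S_t=\bigvee_{0\le s\le t}\sigma\{\Lambda_s(A):|A\setminus S|\le1\}$, and $\mathcal F_{V^\star_t}=\{B\in\mathcal F: B\cap\{V^\star_t=S\}\in\mathcal F^S_t\text{ for all }S\subset V\}$. *)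

theory Defs
  imports "HOL-Probability.Probability"
begin

text \<open>A hypergraph on a finite vertex set W is a map L :: nat set => nat (only the
values on subsets of W matter).  hproj W L S is the hypergraph L^S on W - S:
L^S(A) = sum of L(B) over B subset of W with B containing A and B - S = A.\<close>

definition hproj :: "nat set \<Rightarrow> (nat set \<Rightarrow> nat) \<Rightarrow> nat set \<Rightarrow> nat set \<Rightarrow> nat" where
  "hproj W L S A = (\<Sum>B | B \<subseteq> W \<and> A \<subseteq> B \<and> B - S = A. L B)"

inductive collapse_step :: "nat set \<times> (nat set \<Rightarrow> nat) \<Rightarrow> nat set \<times> (nat set \<Rightarrow> nat) \<Rightarrow> bool" where
  "v \<in> W \<Longrightarrow> L {v} \<ge> 1 \<Longrightarrow> collapse_step (W, L) (W - {v}, hproj W L {v})"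

definition collapse_terminal :: "nat set \<times> (nat set \<Rightarrow> nat) \<Rightarrow> bool" where
  "collapse_terminal WL \<longleftrightarrow> (\<forall>v\<in>fst WL. snd WL {v} = 0)"

definition identifiable :: "nat set \<Rightarrow> (nat set \<Rightarrow> nat) \<Rightarrow> nat set" where
  "identifiable V L = (THE S. \<exists>W' L'. collapse_step\<^sup>*\<^sup>* (V, L) (W', L')
       \<and> collapse_terminal (W', L') \<and> S = V - W')"

definition poisson_prob :: "real \<Rightarrow> nat \<Rightarrow> real" where
  "poisson_prob \<mu> k = exp (- \<mu>) * \<mu> ^ k / fact k"

definition poisson_process :: "'a measure \<Rightarrow> real \<Rightarrow> (real \<Rightarrow> 'a \<Rightarrow> nat) \<Rightarrow> bool" where
  "poisson_process M c X \<longleftrightarrow>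
     (\<forall>s\<ge>0. X s \<in> measurable M (count_space UNIV)) \<and>
     (\<forall>\<omega>\<in>space M. X 0 \<omega> = 0 \<and>
        (\<forall>s s'. 0 \<le> s \<longrightarrow> s \<le> s' \<longrightarrow> X s \<omega> \<le> X s' \<omega>) \<and>
        (\<forall>s\<ge>0. \<exists>\<delta>>0. \<forall>s'. s \<le> s' \<and> s' < s + \<delta> \<longrightarrow> X s' \<omega> = X s \<omega>)) \<and>
     (\<forall>(n::nat) (ts::nat \<Rightarrow> real). 0 \<le> ts 0 \<and> (\<forall>i<n. ts i < ts (Suc i)) \<longrightarrow>
        prob_space.indep_vars M (\<lambda>_. count_space UNIV)
          (\<lambda>i \<omega>. X (ts (Suc i)) \<omega> - X (ts i) \<omega>) {..<n}) \<and>
     (\<forall>s s' k. 0 \<le> s \<longrightarrow> s \<le> s' \<longrightarrow>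
        measure M {\<omega>\<in>space M. X s' \<omega> - X s \<omega> = k} = poisson_prob (c * (s' - s)) k)"

definition hyper_rate :: "nat \<Rightarrow> (nat \<Rightarrow> real) \<Rightarrow> nat set \<Rightarrow> real" where
  "hyper_rate N \<rho> A = real N * \<rho> (card A) / real (N choose card A)"

definition poisson_hypergraph_process ::
  "'a measure \<Rightarrow> nat \<Rightarrow> (nat \<Rightarrow> real) \<Rightarrow> (real \<Rightarrow> 'a \<Rightarrow> nat set \<Rightarrow> nat) \<Rightarrow> bool" where
  "poisson_hypergraph_process M N \<rho> \<Lambda> \<longleftrightarrow>
     (\<forall>A. A \<subseteq> {1..N} \<longrightarrow> poisson_process M (hyper_rate N \<rho> A) (\<lambda>s \<omega>. \<Lambda> s \<omega> A)) \<and>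
     prob_space.indep_vars M (\<lambda>_. PiM {0..} (\<lambda>_::real. count_space (UNIV::nat set)))
        (\<lambda>A \<omega>. restrict (\<lambda>s. \<Lambda> s \<omega> A) {0..}) (Pow {1..N})"

definition Vstar :: "nat \<Rightarrow> (real \<Rightarrow> 'a \<Rightarrow> nat set \<Rightarrow> nat) \<Rightarrow> real \<Rightarrow> 'a \<Rightarrow> nat set" where
  "Vstar N \<Lambda> t \<omega> = identifiable {1..N} (\<Lambda> t \<omega>)"

definition F_sub :: "'a measure \<Rightarrow> nat \<Rightarrow> (real \<Rightarrow> 'a \<Rightarrow> nat set \<Rightarrow> nat) \<Rightarrow> nat set \<Rightarrow> real \<Rightarrow> 'a measure" where
  "F_sub M N \<Lambda> S t = sigma (space M)
     {{\<omega>\<in>space M. \<Lambda> s \<omega> A = k} | s A k. 0 \<le> s \<and> s \<le> t \<and> A \<subseteq> {1..N} \<and> card (A - S) \<le> 1}"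

definition F_stop :: "'a measure \<Rightarrow> nat \<Rightarrow> (real \<Rightarrow> 'a \<Rightarrow> nat set \<Rightarrow> nat) \<Rightarrow> real \<Rightarrow> 'a measure" where
  "F_stop M N \<Lambda> t = sigma (space M)
     {B \<in> sets M. \<forall>S. S \<subseteq> {1..N} \<longrightarrow>
         B \<inter> {\<omega>\<in>space M. Vstar N \<Lambda> t \<omega> = S} \<in> sets (F_sub M N \<Lambda> S t)}"

definition p_event :: "'a measure \<Rightarrow> nat \<Rightarrow> (real \<Rightarrow> 'a \<Rightarrow> nat set \<Rightarrow> nat) \<Rightarrow> real
     \<Rightarrow> (nat set \<Rightarrow> nat) \<Rightarrow> nat set \<Rightarrow> real" where
  "p_event M N \<Lambda> t k S = measure M
     {\<omega>\<in>space M. \<forall>A. A \<subseteq> {1..N} \<and> card (A - S) > 1 \<longrightarrow> \<Lambda> t \<omega> A = k A}"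

definition beta_coef :: "nat \<Rightarrow> (nat \<Rightarrow> real) \<Rightarrow> real \<Rightarrow> nat \<Rightarrow> nat \<Rightarrow> real" where
  "beta_coef N \<rho> t m j = (if j = 1 then 0 else
     t / (1 - real m / real N) * real ((N - m) choose j) *
       (\<Sum>i. \<rho> (i + j) * real (m choose i) / real (N choose (j + i))))"

end

theory Submission
  imports Defs
begin


inductive reach :: "nat set \<Rightarrow> (nat set \<Rightarrow> nat) \<Rightarrow> nat set \<Rightarrow> bool" for V L where
  reach0: "reach V L {}"
| reachS: "reach V L S \<Longrightarrow> v \<in> V - S \<Longrightarrow> hproj V L S {v} \<ge> 1 \<Longrightarrow> reach V L (insert v S)"

definition term_at :: "nat set \<Rightarrow> (nat set \<Rightarrow> nat) \<Rightarrow> nat set \<Rightarrow> bool" where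
  "term_at V L S \<longleftrightarrow> (\<forall>v\<in>V - S. hproj V L S {v} = 0)"

lemma reach_sub: "reach V L S \<Longrightarrow> S \<subseteq> V"
  by (induction rule: reach.induct) auto

lemma hproj_empty: "A \<subseteq> V \<Longrightarrow> hproj V L {} A = L A"
proof -
  assume "A \<subseteq> V"
  then have "{B. B \<subseteq> V \<and> A \<subseteq> B \<and> B - {} = A} = {A}" by auto
  then show ?thesis unfolding hproj_def by simp
qed

lemma hproj_step:
  assumes fin: "finite V" and S: "S \<subseteq> V" and v: "v \<in> V - S"
    and L1: "\<forall>B. B \<subseteq> V - S \<longrightarrow> L1 B = hproj V L S B"
    and A: "A \<subseteq> V - S - {v}"
  shows "hproj (V - S) L1 {v} A = hproj V L (insert v S) A"
proof -
  have vA: "v \<notin> A" using A by auto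
  have e1: "{B. B \<subseteq> V - S \<and> A \<subseteq> B \<and> B - {v} = A} = {A, insert v A}"
    using A v by auto
  have ne: "A \<noteq> insert v A" using vA by auto
  have "hproj (V - S) L1 {v} A = L1 A + L1 (insert v A)"
    unfolding hproj_def e1 using ne by simp
  also have "\<dots> = hproj V L S A + hproj V L S (insert v A)"
  proof -
    have "A \<subseteq> V - S" "insert v A \<subseteq> V - S" using A v by auto
    then show ?thesis using L1 by simp
  qed
  also have "\<dots> = hproj V L (insert v S) A"
  proof -
    let ?Y1 = "{B. B \<subseteq> V \<and> A \<subseteq> B \<and> B - S = A}"
    let ?Y2 = "{B. B \<subseteq> V \<and> insert v A \<subseteq> B \<and> B - S = insert v A}"
    have f1: "finite ?Y1" by (rule finite_subset[of _ "Pow V"]) (use fin in auto)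
    have f2: "finite ?Y2" by (rule finite_subset[of _ "Pow V"]) (use fin in auto)
    have d: "?Y1 \<inter> ?Y2 = {}" using vA by auto
    have u: "{B. B \<subseteq> V \<and> A \<subseteq> B \<and> B - insert v S = A} = ?Y1 \<union> ?Y2"
      using A v by auto
    show ?thesis unfolding hproj_def u by (subst sum.union_disjoint[OF f1 f2 d]) (rule refl)
  qed
  finally show ?thesis .
qed

lemma R1:
  assumes "collapse_step\<^sup>*\<^sup>* (V, L) WL" and fin: "finite V"
  shows "fst WL \<subseteq> V \<and> reach V L (V - fst WL) \<and> (\<forall>A. A \<subseteq> fst WL \<longrightarrow> snd WL A = hproj V L (V - fst WL) A)"
  using assms(1)
proof (induction rule: rtranclp_induct)
  case base
  then show ?case using hproj_empty by (auto intro: reach.intros)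
next
  case (step y z)
  obtain W L1 where y: "y = (W, L1)" by force
  from step(2) obtain v where v: "v \<in> W" "L1 {v} \<ge> 1" and z: "z = (W - {v}, hproj W L1 {v})"
    unfolding y by (auto elim: collapse_step.cases)
  have IH: "W \<subseteq> V" "reach V L (V - W)" "\<forall>A. A \<subseteq> W \<longrightarrow> L1 A = hproj V L (V - W) A"
    using step(3) y by auto
  have W: "W = V - (V - W)" using IH(1) by auto
  have L1': "\<forall>B. B \<subseteq> V - (V - W) \<longrightarrow> L1 B = hproj V L (V - W) B" using IH(3) W by auto
  have r: "reach V L (insert v (V - W))"
    using reachS[OF IH(2), of v] v IH by auto
  have e: "V - (W - {v}) = insert v (V - W)" using IH(1) v by auto
  show ?case unfolding z fst_conv snd_conv e
  proof (intro conjI allI impI)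
    show "W - {v} \<subseteq> V" using IH by auto
    show "reach V L (insert v (V - W))" by (rule r)
    fix A assume "A \<subseteq> W - {v}"
    then show "hproj W L1 {v} A = hproj V L (insert v (V - W)) A"
      using hproj_step[OF fin _ _ L1', of v A] v W by auto
  qed
qed

lemma R2:
  assumes "reach V L S" and fin: "finite V"
  shows "\<exists>L'. collapse_step\<^sup>*\<^sup>* (V, L) (V - S, L') \<and> (\<forall>A. A \<subseteq> V - S \<longrightarrow> L' A = hproj V L S A)"
  using assms(1)
proof (induction rule: reach.induct)
  case reach0
  then show ?case using hproj_empty by auto
next
  case (reachS S v)
  then obtain L1 where L1: "collapse_step\<^sup>*\<^sup>* (V, L) (V - S, L1)" "\<forall>A. A \<subseteq> V - S \<longrightarrow> L1 A = hproj V L S A"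
    by auto
  have S: "S \<subseteq> V" using reachS(1) by (rule reach_sub)
  have "L1 {v} \<ge> 1" using L1(2) reachS(2,3) by auto
  then have "collapse_step (V - S, L1) (V - S - {v}, hproj (V - S) L1 {v})"
    using reachS(2) by (intro collapse_step.intros) auto
  moreover have "V - S - {v} = V - insert v S" by auto
  ultimately have "collapse_step\<^sup>*\<^sup>* (V, L) (V - insert v S, hproj (V - S) L1 {v})"
    using L1(1) by (metis rtranclp.rtrancl_into_rtrancl)
  moreover have "\<forall>A. A \<subseteq> V - insert v S \<longrightarrow> hproj (V - S) L1 {v} A = hproj V L (insert v S) A"
  proof (intro allI impI)
    fix A assume "A \<subseteq> V - insert v S"
    then have "A \<subseteq> V - S - {v}" by auto
    then show "hproj (V - S) L1 {v} A = hproj V L (insert v S) A"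
      by (rule hproj_step[OF fin S reachS(2) L1(2)])
  qed
  ultimately show ?case by blast
qed

lemma hproj_mono:
  assumes fin: "finite V" and "S \<subseteq> S'" "v \<notin> S'"
  shows "hproj V L S {v} \<le> hproj V L S' {v}"
  unfolding hproj_def
proof (rule sum_mono2)
  show "finite {B. B \<subseteq> V \<and> {v} \<subseteq> B \<and> B - S' = {v}}"
    by (rule finite_subset[of _ "Pow V"]) (use fin in auto)
  show "{B. B \<subseteq> V \<and> {v} \<subseteq> B \<and> B - S = {v}} \<subseteq> {B. B \<subseteq> V \<and> {v} \<subseteq> B \<and> B - S' = {v}}"
    using assms by auto
qed auto

lemma reach_le_term:
  assumes "reach V L S1" "reach V L S2" "term_at V L S2" "finite V"
  shows "S1 \<subseteq> S2"
  using assms(1)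
proof (induction rule: reach.induct)
  case reach0 then show ?case by simp
next
  case (reachS S v)
  show ?case
  proof (rule ccontr)
    assume "\<not> insert v S \<subseteq> S2"
    then have "v \<notin> S2" using reachS by auto
    then have "hproj V L S {v} \<le> hproj V L S2 {v}" using hproj_mono[OF assms(4) reachS(4)] by auto
    moreover have "hproj V L S2 {v} = 0" using assms(3) \<open>v \<notin> S2\<close> reachS(2) unfolding term_at_def by auto
    ultimately show False using reachS(3) by auto
  qed
qed

lemma reach_exists:
  assumes fin: "finite V"
  shows "\<exists>S. reach V L S \<and> term_at V L S"
proof -
  have "\<exists>S. reach V L S \<and> (term_at V L S \<or> card S \<ge> n)" for n
  proof (induction n)
    case 0 then show ?case using reach0 by blast
  next
    case (Suc n)
    then obtain S where S: "reach V L S" "term_at V L S \<or> card S \<ge> n" by blast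
    show ?case
    proof (cases "term_at V L S")
      case True then show ?thesis using S by blast
    next
      case False
      then obtain v where v: "v \<in> V - S" "hproj V L S {v} \<noteq> 0" unfolding term_at_def by auto
      have r: "reach V L (insert v S)" using reachS[OF S(1) v(1)] v(2) by auto
      have "finite S" using reach_sub[OF S(1)] fin finite_subset by auto
      then have "card (insert v S) = Suc (card S)" using v by simp
      then show ?thesis using r S False by auto
    qed
  qed
  from this[of "Suc (card V)"] obtain S where S: "reach V L S" "term_at V L S \<or> card S \<ge> Suc (card V)" by blast
  have "card S \<le> card V" using reach_sub[OF S(1)] fin card_mono by auto
  then show ?thesis using S by auto
qed

lemma P_iff:
  assumes fin: "finite V"
  shows "(\<exists>W' L'. collapse_step\<^sup>*\<^sup>* (V, L) (W', L') \<and> collapse_terminal (W', L') \<and> S = V - W') \<longleftrightarrow> reach V L S \<and> term_at V L S"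
proof (rule iffI)
  assume "\<exists>W' L'. collapse_step\<^sup>*\<^sup>* (V, L) (W', L') \<and> collapse_terminal (W', L') \<and> S = V - W'"
  then obtain W' L' where w: "collapse_step\<^sup>*\<^sup>* (V, L) (W', L')" "collapse_terminal (W', L')" "S = V - W'"
    by blast
  have h: "W' \<subseteq> V" "reach V L (V - W')" "\<forall>A. A \<subseteq> W' \<longrightarrow> L' A = hproj V L (V - W') A"
    using R1[OF w(1) fin] by simp_all
  have W': "W' = V - S" using h(1) w(3) by auto
  have "term_at V L S" unfolding term_at_def
  proof
    fix v assume v: "v \<in> V - S"
    then have "v \<in> W'" using W' by simp
    then have "L' {v} = 0" using w(2) unfolding collapse_terminal_def by simp
    moreover have "L' {v} = hproj V L (V - W') {v}" using h(3) \<open>v \<in> W'\<close> by simp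
    ultimately show "hproj V L S {v} = 0" using w(3) by simp
  qed
  then show "reach V L S \<and> term_at V L S" using h(2) w(3) by simp
next
  assume a: "reach V L S \<and> term_at V L S"
  from R2[OF conjunct1[OF a] fin] obtain L' where
    l: "collapse_step\<^sup>*\<^sup>* (V, L) (V - S, L')" "\<forall>A. A \<subseteq> V - S \<longrightarrow> L' A = hproj V L S A" by blast
  have "S \<subseteq> V" using reach_sub a by blast
  then have e: "S = V - (V - S)" by auto
  have "collapse_terminal (V - S, L')"
    unfolding collapse_terminal_def
  proof
    fix v assume "v \<in> fst (V - S, L')"
    then have v: "v \<in> V - S" by simp
    then have "L' {v} = hproj V L S {v}" using l(2) by simp
    then show "snd (V - S, L') {v} = 0" using a v unfolding term_at_def by simp
  qed
  then show "\<exists>W' L'. collapse_step\<^sup>*\<^sup>* (V, L) (W', L') \<and> collapse_terminal (W', L') \<and> S = V - W'"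
    using l(1) e by blast
qed

lemma identifiable_iff:
  assumes fin: "finite V"
  shows "identifiable V L = S \<longleftrightarrow> reach V L S \<and> term_at V L S"
proof -
  obtain S0 where S0: "reach V L S0" "term_at V L S0" using reach_exists[OF fin] by blast
  have uniq: "S' = S0" if "reach V L S'" "term_at V L S'" for S'
  proof -
    have "S' \<subseteq> S0" by (rule reach_le_term[OF that(1) S0 fin])
    moreover have "S0 \<subseteq> S'" by (rule reach_le_term[OF S0(1) that fin])
    ultimately show ?thesis by (rule subset_antisym)
  qed
  have "identifiable V L = S0"
    unfolding identifiable_def
  proof (rule the_equality)
    show "\<exists>W' L'. collapse_step\<^sup>*\<^sup>* (V, L) (W', L') \<and> collapse_terminal (W', L') \<and> S0 = V - W'"
      by (rule P_iff[OF fin, THEN iffD2]) (rule conjI[OF S0])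
    fix S' assume "\<exists>W' L'. collapse_step\<^sup>*\<^sup>* (V, L) (W', L') \<and> collapse_terminal (W', L') \<and> S' = V - W'"
    then have "reach V L S' \<and> term_at V L S'" by (rule P_iff[OF fin, THEN iffD1])
    then show "S' = S0" using uniq by simp
  qed
    note idS0 = this
  show ?thesis
  proof
    assume "identifiable V L = S"
    then have "S = S0" using idS0 by simp
    then show "reach V L S \<and> term_at V L S" using S0 by simp
  next
    assume "reach V L S \<and> term_at V L S"
    then have "S = S0" using uniq by blast
    then show "identifiable V L = S" using idS0 by simp
  qed
qed

lemma locality:
  assumes fin: "finite V" and S: "S \<subseteq> V"
    and agree: "\<And>A. A \<subseteq> V \<Longrightarrow> card (A - S) \<le> 1 \<Longrightarrow> L A = L' A"
  shows "reach V L S \<longleftrightarrow> reach V L' S" "term_at V L S \<longleftrightarrow> term_at V L' S"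
proof -
  have hp: "hproj V L S' {v} = hproj V L' S' {v}" if "S' \<subseteq> S" "v \<notin> S'" for S' v
    unfolding hproj_def
  proof (rule sum.cong[OF refl])
    fix B assume "B \<in> {B. B \<subseteq> V \<and> {v} \<subseteq> B \<and> B - S' = {v}}"
    then have B: "B \<subseteq> V" "B - S' = {v}" by auto
    have "B - S \<subseteq> {v}" using B that by auto
    then have "card (B - S) \<le> 1" using card_mono[of "{v}" "B - S"] by auto
    then show "L B = L' B" using agree B by auto
  qed
  have *: "reach V L1 S' \<Longrightarrow> S' \<subseteq> S \<Longrightarrow> (\<And>S' v. S' \<subseteq> S \<Longrightarrow> v \<notin> S' \<Longrightarrow> hproj V L1 S' {v} = hproj V L2 S' {v}) \<Longrightarrow> reach V L2 S'" for L1 L2 S'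
  proof (induction rule: reach.induct)
    case reach0 show ?case by (rule reach.reach0)
  next
    case (reachS S1 v)
    have "reach V L2 S1" using reachS by auto
    moreover have "hproj V L1 S1 {v} = hproj V L2 S1 {v}" using reachS by auto
    ultimately show ?case using reachS by (metis reach.reachS)
  qed
  show "reach V L S \<longleftrightarrow> reach V L' S"
  proof
    assume "reach V L S" then show "reach V L' S" by (rule *) (auto simp: hp)
  next
    assume "reach V L' S" then show "reach V L S" by (rule *) (auto simp: hp)
  qed
  show "term_at V L S \<longleftrightarrow> term_at V L' S"
    unfolding term_at_def using hp by auto
qed




lemma finite_count_sets:
  assumes "finite I" "X \<subseteq> space (PiM I (\<lambda>_. count_space (UNIV::nat set)))"
  shows "X \<in> sets (PiM I (\<lambda>_. count_space (UNIV::nat set)))"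
proof -
  have sp: "space (PiM I (\<lambda>_. count_space (UNIV::nat set))) = PiE I (\<lambda>_. UNIV)"
    by (simp add: space_PiM)
  have cX: "countable X"
    by (rule countable_subset[OF assms(2)[unfolded sp]]) (rule countable_PiE[OF assms(1)], simp)
  have sing: "{x} \<in> sets (PiM I (\<lambda>_. count_space (UNIV::nat set)))" if "x \<in> X" for x
  proof -
    have "x \<in> extensional I" using that assms(2) sp by (auto simp: PiE_def)
    then have "{x} = PiE I (\<lambda>i. {x i})" by (simp add: PiE_singleton)
    also have "\<dots> \<in> sets (PiM I (\<lambda>_. count_space (UNIV::nat set)))"
      by (rule sets_PiM_I_finite[OF assms(1)]) simp
    finally show ?thesis .
  qed
  have "X = (\<Union>x\<in>X. {x})" by simp
  also have "\<dots> \<in> sets (PiM I (\<lambda>_. count_space (UNIV::nat set)))"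
    using cX sing by (intro sets.countable_UN') auto
  finally show ?thesis .
qed

lemma finite_count_measurable:
  assumes "finite I"
  shows "(f :: (nat set \<Rightarrow> nat) \<Rightarrow> 'c::countable) \<in> measurable (PiM I (\<lambda>_. count_space (UNIV::nat set))) (count_space UNIV)"
  unfolding measurable_count_space_eq2_countable
proof (intro conjI ballI)
  show "f \<in> space (PiM I (\<lambda>_. count_space (UNIV::nat set))) \<rightarrow> UNIV" by simp
  fix a :: 'c
  show "f -` {a} \<inter> space (PiM I (\<lambda>_. count_space (UNIV::nat set))) \<in> sets (PiM I (\<lambda>_. count_space (UNIV::nat set)))"
    by (rule finite_count_sets[OF assms]) auto
qed

locale hyp =
  fixes M :: "'a measure" and N :: nat and \<rho> :: "nat \<Rightarrow> real"
    and \<Lambda> :: "real \<Rightarrow> 'a \<Rightarrow> nat set \<Rightarrow> nat" and t :: real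
  assumes ps: "prob_space M" and proc: "poisson_hypergraph_process M N \<rho> \<Lambda>"
    and tpos: "t > 0" and rho_nn: "\<forall>j. 0 \<le> \<rho> j"
begin

sublocale prob_space M by (rule ps)

abbreviation "V \<equiv> {1..N}"
abbreviation "PS \<equiv> PiM {0..} (\<lambda>_::real. count_space (UNIV::nat set))"
definition "Acal S = {A. A \<subseteq> V \<and> card (A - S) \<le> 1}"
definition "Ccal S = {A. A \<subseteq> V \<and> card (A - S) > 1}"
definition "Pth A \<omega> = restrict (\<lambda>s. \<Lambda> s \<omega> A) {0..}"
definition "G S = {\<omega>\<in>space M. Vstar N \<Lambda> t \<omega> = S}"
definition "gen S = {{\<omega>\<in>space M. \<Lambda> s \<omega> A = k} | s A k. 0 \<le> s \<and> s \<le> t \<and> A \<subseteq> V \<and> card (A - S) \<le> 1}"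

lemma finV: "finite V" by simp

lemma proc_A: "A \<subseteq> V \<Longrightarrow> poisson_process M (hyper_rate N \<rho> A) (\<lambda>s \<omega>. \<Lambda> s \<omega> A)"
  using proc unfolding poisson_hypergraph_process_def by auto

lemma meas_comp: "A \<subseteq> V \<Longrightarrow> 0 \<le> s \<Longrightarrow> (\<lambda>\<omega>. \<Lambda> s \<omega> A) \<in> measurable M (count_space UNIV)"
  using proc_A unfolding poisson_process_def by auto

lemma indep_paths: "indep_vars (\<lambda>_. PS) Pth (Pow V)"
  using proc unfolding poisson_hypergraph_process_def Pth_def by auto

lemma Pth_meas: "A \<subseteq> V \<Longrightarrow> Pth A \<in> measurable M PS"
  using indep_paths unfolding indep_vars_def by auto

lemma pois: "A \<subseteq> V \<Longrightarrow> prob {\<omega>\<in>space M. \<Lambda> t \<omega> A = k} = poisson_prob (hyper_rate N \<rho> A * t) k"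
proof -
  assume A: "A \<subseteq> V"
  have pp: "poisson_process M (hyper_rate N \<rho> A) (\<lambda>s \<omega>. \<Lambda> s \<omega> A)" by (rule proc_A[OF A])
  have z: "\<forall>\<omega>\<in>space M. \<Lambda> 0 \<omega> A = 0" using pp unfolding poisson_process_def by auto
  have "measure M {\<omega>\<in>space M. \<Lambda> t \<omega> A - \<Lambda> 0 \<omega> A = k} = poisson_prob (hyper_rate N \<rho> A * (t - 0)) k"
    using pp tpos unfolding poisson_process_def by auto
  moreover have "{\<omega>\<in>space M. \<Lambda> t \<omega> A - \<Lambda> 0 \<omega> A = k} = {\<omega>\<in>space M. \<Lambda> t \<omega> A = k}"
    using z by auto
  ultimately show ?thesis by simp
qed

lemma gen_Pow: "gen S \<subseteq> Pow (space M)"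
  unfolding gen_def by auto

lemma Fsub_space: "space (F_sub M N \<Lambda> S t) = space M"
  unfolding F_sub_def using gen_Pow[of S] unfolding gen_def by simp

lemma Fsub_sets: "sets (F_sub M N \<Lambda> S t) = sigma_sets (space M) (gen S)"
  unfolding F_sub_def using gen_Pow[of S] unfolding gen_def by simp

lemma gen_sets: "gen S \<subseteq> sets M"
proof
  fix X assume "X \<in> gen S"
  then obtain s A k where X: "X = {\<omega>\<in>space M. \<Lambda> s \<omega> A = k}" "0 \<le> s" "A \<subseteq> V"
    unfolding gen_def by auto
  have "(\<lambda>\<omega>. \<Lambda> s \<omega> A) -` {k} \<inter> space M \<in> sets M"
    by (rule measurable_sets[OF meas_comp[OF X(3,2)]]) simp
  moreover have "(\<lambda>\<omega>. \<Lambda> s \<omega> A) -` {k} \<inter> space M = X" using X by auto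
  ultimately show "X \<in> sets M" by simp
qed

lemma Fsub_subset: "sets (F_sub M N \<Lambda> S t) \<subseteq> sets M"
  unfolding Fsub_sets by (rule sets.sigma_sets_subset[OF gen_sets])

lemma comp_Fsub_meas:
  assumes "A \<in> Acal S"
  shows "(\<lambda>\<omega>. \<Lambda> t \<omega> A) \<in> measurable (F_sub M N \<Lambda> S t) (count_space UNIV)"
  unfolding measurable_count_space_eq2_countable
proof (intro conjI ballI)
  show "(\<lambda>\<omega>. \<Lambda> t \<omega> A) \<in> space (F_sub M N \<Lambda> S t) \<rightarrow> UNIV" by simp
  fix k :: nat
  have "(\<lambda>\<omega>. \<Lambda> t \<omega> A) -` {k} \<inter> space (F_sub M N \<Lambda> S t) = {\<omega>\<in>space M. \<Lambda> t \<omega> A = k}"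
    unfolding Fsub_space by auto
  also have "\<dots> \<in> gen S" unfolding gen_def using assms tpos unfolding Acal_def
    by (intro CollectI exI[of _ t] exI[of _ A] exI[of _ k]) auto
  finally show "(\<lambda>\<omega>. \<Lambda> t \<omega> A) -` {k} \<inter> space (F_sub M N \<Lambda> S t) \<in> sets (F_sub M N \<Lambda> S t)"
    unfolding Fsub_sets by auto
qed

lemma finite_Acal: "finite (Acal S)"
  by (rule finite_subset[of _ "Pow V"]) (auto simp: Acal_def)

lemma finite_Ccal: "finite (Ccal S)"
  by (rule finite_subset[of _ "Pow V"]) (auto simp: Ccal_def)

lemma Vstar_iff: "Vstar N \<Lambda> t \<omega> = S \<longleftrightarrow> reach V (\<Lambda> t \<omega>) S \<and> term_at V (\<Lambda> t \<omega>) S"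
  unfolding Vstar_def by (rule identifiable_iff[OF finV])

lemma Vstar_sub: "Vstar N \<Lambda> t \<omega> \<subseteq> V"
  using Vstar_iff[of \<omega> "Vstar N \<Lambda> t \<omega>"] reach_sub by blast

lemma G_Fsub:
  assumes S: "S \<subseteq> V"
  shows "G S \<in> sets (F_sub M N \<Lambda> S t)"
proof -
  let ?Y = "\<lambda>\<omega>. \<lambda>A\<in>Acal S. \<Lambda> t \<omega> A"
  let ?ext = "\<lambda>h A. if A \<in> Acal S then h A else 0"
  let ?Q = "\<lambda>h. reach V (?ext h) S \<and> term_at V (?ext h) S"
  have Ym: "?Y \<in> measurable (F_sub M N \<Lambda> S t) (PiM (Acal S) (\<lambda>_. count_space (UNIV::nat set)))"
    by (rule measurable_restrict) (rule comp_Fsub_meas)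
  have Qm: "{h \<in> space (PiM (Acal S) (\<lambda>_. count_space (UNIV::nat set))). ?Q h} \<in> sets (PiM (Acal S) (\<lambda>_. count_space (UNIV::nat set)))"
    by (rule finite_count_sets[OF finite_Acal]) auto
  have eq: "G S = ?Y -` {h \<in> space (PiM (Acal S) (\<lambda>_. count_space (UNIV::nat set))). ?Q h} \<inter> space (F_sub M N \<Lambda> S t)"
  proof -
    have "Vstar N \<Lambda> t \<omega> = S \<longleftrightarrow> ?Q (?Y \<omega>)" for \<omega>
    proof -
      have ag: "\<And>A. A \<subseteq> V \<Longrightarrow> card (A - S) \<le> 1 \<Longrightarrow> \<Lambda> t \<omega> A = ?ext (?Y \<omega>) A"
        by (auto simp: Acal_def)
      show ?thesis unfolding Vstar_iff using locality[OF finV S ag] by simp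
    qed
    moreover have "?Y \<omega> \<in> space (PiM (Acal S) (\<lambda>_. count_space (UNIV::nat set)))" for \<omega>
      by (simp add: space_PiM)
    ultimately show ?thesis unfolding G_def Fsub_space by auto
  qed
  show ?thesis unfolding eq by (rule measurable_sets[OF Ym Qm])
qed

lemma G_sets: "S \<subseteq> V \<Longrightarrow> G S \<in> sets M"
  using G_Fsub Fsub_subset by blast

end


context hyp begin

lemma comp_t_meas: "(\<lambda>f. f A t) \<in> measurable (PiM I (\<lambda>_. PS)) (count_space UNIV)" if "A \<in> I" for A I
proof -
  have "(\<lambda>f. f A) \<in> measurable (PiM I (\<lambda>_. PS)) PS" by (rule measurable_component_singleton[OF that])
  moreover have "(\<lambda>g. g t) \<in> measurable PS (count_space UNIV)"
    by (rule measurable_component_singleton) (use tpos in simp)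
  ultimately show ?thesis by (rule measurable_compose)
qed

lemma comp_s_meas: "(\<lambda>f. f A s) \<in> measurable (PiM I (\<lambda>_. PS)) (count_space UNIV)" if "A \<in> I" "0 \<le> s" for A I s
proof -
  have "(\<lambda>f. f A) \<in> measurable (PiM I (\<lambda>_. PS)) PS" by (rule measurable_component_singleton[OF that(1)])
  moreover have "(\<lambda>g. g s) \<in> measurable PS (count_space UNIV)"
    by (rule measurable_component_singleton) (use that in simp)
  ultimately show ?thesis by (rule measurable_compose)
qed

lemma Xev_sets: "S \<subseteq> V \<Longrightarrow> {\<omega>\<in>space M. (\<lambda>A\<in>Ccal S. \<Lambda> t \<omega> A) \<in> e} \<in> sets M"
proof -
  let ?MN = "PiM (Ccal S) (\<lambda>_. count_space (UNIV::nat set))"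
  have m: "(\<lambda>\<omega>. \<lambda>A\<in>Ccal S. \<Lambda> t \<omega> A) \<in> measurable M ?MN"
    by (rule measurable_restrict) (rule meas_comp, auto simp: Ccal_def tpos less_imp_le)
  have "e \<inter> space ?MN \<in> sets ?MN" by (rule finite_count_sets[OF finite_Ccal]) auto
  from measurable_sets[OF m this]
  show ?thesis by (simp add: space_PiM vimage_def Int_def conj_commute)
qed

lemma IND:
  assumes S: "S \<subseteq> V" and Y: "Y \<in> sets (F_sub M N \<Lambda> S t)"
  shows "prob (Y \<inter> {\<omega>\<in>space M. (\<lambda>A\<in>Ccal S. \<Lambda> t \<omega> A) \<in> e}) = prob Y * prob {\<omega>\<in>space M. (\<lambda>A\<in>Ccal S. \<Lambda> t \<omega> A) \<in> e}"
proof -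
  define E where "E = {\<omega>\<in>space M. (\<lambda>A\<in>Ccal S. \<Lambda> t \<omega> A) \<in> e}"
  define XA where "XA = (\<lambda>\<omega>. restrict (\<lambda>i. Pth i \<omega>) (Acal S))"
  define XC where "XC = (\<lambda>\<omega>. restrict (\<lambda>i. Pth i \<omega>) (Ccal S))"
  define MA where "MA = PiM (Acal S) (\<lambda>_. PS)"
  define MC where "MC = PiM (Ccal S) (\<lambda>_. PS)"
  have iv: "indep_var MA XA MC XC"
    unfolding MA_def XA_def MC_def XC_def
    by (rule indep_var_restrict[OF indep_paths]) (auto simp: Acal_def Ccal_def)
  then have isets: "indep_sets (\<lambda>b. sigma_sets (space M) {case_bool XA XC b -` a \<inter> space M | a. a \<in> sets (case_bool MA MC b)}) UNIV"
    unfolding indep_var_def indep_vars_def by simp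
  have XAm: "XA \<in> measurable M MA" unfolding XA_def MA_def
    by (rule measurable_restrict) (auto simp: Acal_def intro!: Pth_meas)
  have XCm: "XC \<in> measurable M MC" unfolding XC_def MC_def
    by (rule measurable_restrict) (auto simp: Ccal_def intro!: Pth_meas)
  have Y1: "Y \<in> sigma_sets (space M) {XA -` a \<inter> space M | a. a \<in> sets MA}"
  proof -
    have "gen S \<subseteq> {XA -` a \<inter> space M | a. a \<in> sets MA}"
    proof
      fix X assume "X \<in> gen S"
      then obtain s A k where X: "X = {\<omega>\<in>space M. \<Lambda> s \<omega> A = k}" "0 \<le> s" "s \<le> t" "A \<subseteq> V" "card (A - S) \<le> 1"
        unfolding gen_def by auto
      have AA: "A \<in> Acal S" using X unfolding Acal_def by auto
      have "(\<lambda>f. f A s) -` {k} \<inter> space MA \<in> sets MA"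
        unfolding MA_def by (rule measurable_sets[OF comp_s_meas[OF AA X(2)]]) simp
      moreover have "X = XA -` ((\<lambda>f. f A s) -` {k} \<inter> space MA) \<inter> space M"
        using measurable_space[OF XAm] X AA by (auto simp: Pth_def XA_def)
      ultimately show "X \<in> {XA -` a \<inter> space M | a. a \<in> sets MA}" by blast
    qed
    then have "sigma_sets (space M) (gen S) \<subseteq> sigma_sets (space M) {XA -` a \<inter> space M | a. a \<in> sets MA}"
      by (rule sigma_sets_mono')
    then show ?thesis using Y Fsub_sets by auto
  qed
  have Y2: "E \<in> sigma_sets (space M) {XC -` a \<inter> space M | a. a \<in> sets MC}"
  proof -
    let ?T = "\<lambda>f. \<lambda>A\<in>Ccal S. f A t"
    let ?MN = "PiM (Ccal S) (\<lambda>_. count_space (UNIV::nat set))"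
    have Tm: "?T \<in> measurable MC ?MN" unfolding MC_def
      by (rule measurable_restrict) (rule comp_t_meas)
    have "e \<inter> space ?MN \<in> sets ?MN" by (rule finite_count_sets[OF finite_Ccal]) auto
    then have a: "?T -` (e \<inter> space ?MN) \<inter> space MC \<in> sets MC" by (rule measurable_sets[OF Tm])
    have "E = XC -` (?T -` (e \<inter> space ?MN) \<inter> space MC) \<inter> space M"
    proof -
      have "?T (XC \<omega>) = (\<lambda>A\<in>Ccal S. \<Lambda> t \<omega> A)" for \<omega>
        using tpos by (auto simp: XC_def Pth_def fun_eq_iff)
      then show ?thesis using measurable_space[OF XCm] unfolding E_def by (auto simp: space_PiM)
    qed
    then show ?thesis using a by blast
  qed
  have "prob (\<Inter>b\<in>UNIV. case_bool Y E b) = (\<Prod>b\<in>UNIV. prob (case_bool Y E b))"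
    by (rule indep_setsD[OF isets]) (auto simp: Y1 Y2 split: bool.split)
  then show ?thesis unfolding E_def[symmetric] by (simp add: UNIV_bool Int_commute mult.commute)
qed

definition "Gc = {B \<in> sets M. \<forall>S. S \<subseteq> V \<longrightarrow> B \<inter> G S \<in> sets (F_sub M N \<Lambda> S t)}"

lemma Gc_Pow: "Gc \<subseteq> Pow (space M)"
  unfolding Gc_def using sets.sets_into_space by auto

lemma Fstop_eq: "F_stop M N \<Lambda> t = sigma (space M) Gc"
  unfolding F_stop_def Gc_def G_def by simp

lemma Fstop_space: "space (F_stop M N \<Lambda> t) = space M"
  unfolding Fstop_eq using Gc_Pow by simp

lemma Fstop_sets: "sets (F_stop M N \<Lambda> t) = sigma_sets (space M) Gc"
  unfolding Fstop_eq using Gc_Pow by simp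

lemma G_sub: "G S \<subseteq> space M" unfolding G_def by auto

lemma Fstop_char:
  assumes "B \<in> sets (F_stop M N \<Lambda> t)"
  shows "B \<in> sets M \<and> (\<forall>S. S \<subseteq> V \<longrightarrow> B \<inter> G S \<in> sets (F_sub M N \<Lambda> S t))"
  using assms unfolding Fstop_sets
proof (induction rule: sigma_sets.induct)
  case (Basic a) then show ?case unfolding Gc_def by auto
next
  case Empty then show ?case by auto
next
  case (Compl a)
  have "(space M - a) \<inter> G S \<in> sets (F_sub M N \<Lambda> S t)" if "S \<subseteq> V" for S
  proof -
    have "(space M - a) \<inter> G S = G S - (a \<inter> G S)" using G_sub by auto
    then show ?thesis using Compl.IH that G_Fsub[OF that] by auto
  qed
  then show ?case using Compl.IH by auto
next
  case (Union a)
  have "(\<Union>i. a i) \<inter> G S \<in> sets (F_sub M N \<Lambda> S t)" if "S \<subseteq> V" for S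
  proof -
    have "(\<Union>i. a i) \<inter> G S = (\<Union>i. a i \<inter> G S)" by auto
    moreover have "(\<Union>i. a i \<inter> G S) \<in> sets (F_sub M N \<Lambda> S t)"
      using Union.IH that by (intro sets.countable_UN) auto
    ultimately show ?thesis by simp
  qed
  then show ?case using Union.IH by auto
qed

lemma G_Fstop: "S \<subseteq> V \<Longrightarrow> G S \<in> sets (F_stop M N \<Lambda> t)"
proof -
  assume S: "S \<subseteq> V"
  have "G S \<in> Gc" unfolding Gc_def
  proof (intro CollectI conjI allI impI)
    show "G S \<in> sets M" by (rule G_sets[OF S])
    fix S' assume S': "S' \<subseteq> V"
    show "G S \<inter> G S' \<in> sets (F_sub M N \<Lambda> S' t)"
    proof (cases "S = S'")
      case True then show ?thesis using G_Fsub[OF S'] by simp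
    next
      case False then have "G S \<inter> G S' = {}" unfolding G_def by auto
      then show ?thesis by simp
    qed
  qed
  then show ?thesis unfolding Fstop_sets by auto
qed

lemma subalg: "subalgebra M (F_stop M N \<Lambda> t)"
  unfolding subalgebra_def using Fstop_char Fstop_space by auto

lemma set_int_ind: "B \<in> sets M \<Longrightarrow> C \<in> sets M \<Longrightarrow> (\<integral>\<omega>\<in>B. indicator C \<omega> \<partial>M) = measure M (B \<inter> C)"
proof -
  assume B: "B \<in> sets M" and C: "C \<in> sets M"
  have "(\<lambda>\<omega>. indicator B \<omega> *\<^sub>R indicator C \<omega>) = (indicator (B \<inter> C) :: 'a \<Rightarrow> real)"
    by (auto simp: fun_eq_iff indicator_def)
  then have "(\<integral>\<omega>\<in>B. indicator C \<omega> \<partial>M) = measure M (B \<inter> C \<inter> space M)"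
    unfolding set_lebesgue_integral_def by simp
  also have "B \<inter> C \<inter> space M = B \<inter> C" using sets.sets_into_space[OF B] by auto
  finally show ?thesis .
qed

lemma set_int_cind: "B \<in> sets M \<Longrightarrow> C \<in> sets M \<Longrightarrow> (\<integral>\<omega>\<in>B. c * indicator C \<omega> \<partial>M) = c * measure M (B \<inter> C)"
proof -
  assume B: "B \<in> sets M" and C: "C \<in> sets M"
  have "(\<lambda>\<omega>. indicator B \<omega> *\<^sub>R (c * indicator C \<omega>)) = (\<lambda>\<omega>. c * (indicator (B \<inter> C) \<omega> :: real))"
    by (auto simp: fun_eq_iff indicator_def)
  then have "(\<integral>\<omega>\<in>B. c * indicator C \<omega> \<partial>M) = c * measure M (B \<inter> C \<inter> space M)"
    unfolding set_lebesgue_integral_def by simp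
  also have "B \<inter> C \<inter> space M = B \<inter> C" using sets.sets_into_space[OF B] by auto
  finally show ?thesis .
qed

lemma CE:
  assumes S: "S \<subseteq> V"
  shows "AE \<omega> in M. real_cond_exp M (F_stop M N \<Lambda> t) (indicator (G S \<inter> {\<omega>\<in>space M. (\<lambda>A\<in>Ccal S. \<Lambda> t \<omega> A) \<in> e})) \<omega>
     = prob {\<omega>\<in>space M. (\<lambda>A\<in>Ccal S. \<Lambda> t \<omega> A) \<in> e} * indicator (G S) \<omega>"
proof -
  define X where "X = {\<omega>\<in>space M. (\<lambda>A\<in>Ccal S. \<Lambda> t \<omega> A) \<in> e}"
  interpret fs: finite_measure_subalgebra M "F_stop M N \<Lambda> t"
    by unfold_locales (rule subalg)
  have Xs: "X \<in> sets M" unfolding X_def by (rule Xev_sets[OF S])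
  have Gs: "G S \<in> sets M" by (rule G_sets[OF S])
  have "AE \<omega> in M. real_cond_exp M (F_stop M N \<Lambda> t) (indicator (G S \<inter> X)) \<omega> = prob X * indicator (G S) \<omega>"
  proof (rule fs.real_cond_exp_charact)
    fix B assume B: "B \<in> sets (F_stop M N \<Lambda> t)"
    have Bc: "B \<in> sets M" "B \<inter> G S \<in> sets (F_sub M N \<Lambda> S t)" using Fstop_char[OF B] S by auto
    have "(\<integral>\<omega>\<in>B. indicator (G S \<inter> X) \<omega> \<partial>M) = measure M (B \<inter> (G S \<inter> X))"
      using Bc Gs Xs by (intro set_int_ind) auto
    also have "B \<inter> (G S \<inter> X) = (B \<inter> G S) \<inter> X" by auto
    also have "measure M \<dots> = prob (B \<inter> G S) * prob X"
      unfolding X_def by (rule IND[OF S Bc(2)])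
    also have "\<dots> = (\<integral>\<omega>\<in>B. prob X * indicator (G S) \<omega> \<partial>M)"
      using Bc Gs by (subst set_int_cind) auto
    finally show "(\<integral>\<omega>\<in>B. indicator (G S \<inter> X) \<omega> \<partial>M) = (\<integral>\<omega>\<in>B. prob X * indicator (G S) \<omega> \<partial>M)" .
  next
    show "integrable M (indicator (G S \<inter> X) :: 'a \<Rightarrow> real)"
      using Gs Xs by (intro integrable_real_indicator) (auto simp: less_top[symmetric])
    show "integrable M (\<lambda>\<omega>. prob X * indicator (G S) \<omega>)"
      using Gs by (intro integrable_mult_right integrable_real_indicator) (auto simp: less_top[symmetric])
    show "(\<lambda>\<omega>. prob X * indicator (G S) \<omega>) \<in> borel_measurable (F_stop M N \<Lambda> t)"
      using G_Fstop[OF S] by (intro borel_measurable_times borel_measurable_const borel_measurable_indicator)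
  qed
  then show ?thesis unfolding X_def .
qed

end


context hyp begin

lemma cond_sum_single:
  assumes "\<omega> \<in> space M"
  shows "(\<Sum>S\<in>Pow V. f S * indicator (G S) \<omega>) = (f (Vstar N \<Lambda> t \<omega>) :: real)"
proof -
  let ?S0 = "Vstar N \<Lambda> t \<omega>"
  have "(\<Sum>S\<in>Pow V. f S * indicator (G S) \<omega>) = (\<Sum>S\<in>Pow V. if S = ?S0 then f S else 0)"
    by (rule sum.cong) (use assms in \<open>auto simp: G_def indicator_def\<close>)
  also have "\<dots> = f ?S0" using Vstar_sub[of \<omega>] by (simp add: sum.delta')
  finally show ?thesis .
qed

lemma part1:
  "AE \<omega> in M. real_cond_exp M (F_stop M N \<Lambda> t)
      (indicator {\<omega>\<in>space M. \<forall>A. A \<subseteq> V \<and> card (A - Vstar N \<Lambda> t \<omega>) > 1 \<longrightarrow> \<Lambda> t \<omega> A = k A}) \<omega>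
    = p_event M N \<Lambda> t k (Vstar N \<Lambda> t \<omega>)"
proof -
  interpret fs: finite_measure_subalgebra M "F_stop M N \<Lambda> t"
    by unfold_locales (rule subalg)
  define X where "X S = {\<omega>\<in>space M. (\<lambda>A\<in>Ccal S. \<Lambda> t \<omega> A) \<in> {g. \<forall>A\<in>Ccal S. g A = k A}}" for S
  define E where "E = {\<omega>\<in>space M. \<forall>A. A \<subseteq> V \<and> card (A - Vstar N \<Lambda> t \<omega>) > 1 \<longrightarrow> \<Lambda> t \<omega> A = k A}"
  have XS: "X S = {\<omega>\<in>space M. \<forall>A. A \<subseteq> V \<and> card (A - S) > 1 \<longrightarrow> \<Lambda> t \<omega> A = k A}" for S
    unfolding X_def Ccal_def by auto
  have pS: "p_event M N \<Lambda> t k S = prob (X S)" for S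
    unfolding p_event_def XS by simp
  have ind: "indicator E = (\<lambda>\<omega>. \<Sum>S\<in>Pow V. indicator (G S \<inter> X S) \<omega> :: real)"
  proof
    fix \<omega>
    show "indicator E \<omega> = (\<Sum>S\<in>Pow V. indicator (G S \<inter> X S) \<omega> :: real)"
    proof (cases "\<omega> \<in> space M")
      case True
      have "(\<Sum>S\<in>Pow V. indicator (G S \<inter> X S) \<omega> :: real) = (\<Sum>S\<in>Pow V. indicator (X S) \<omega> * indicator (G S) \<omega>)"
        by (rule sum.cong) (auto simp: indicator_def)
      also have "\<dots> = indicator (X (Vstar N \<Lambda> t \<omega>)) \<omega>" by (rule cond_sum_single[OF True])
      also have "\<dots> = indicator E \<omega>" unfolding XS E_def by (simp add: indicator_def)
      finally show ?thesis by simp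
    next
      case False
      then show ?thesis unfolding E_def G_def by (simp add: indicator_def)
    qed
  qed
  have Xs: "S \<subseteq> V \<Longrightarrow> X S \<in> sets M" for S unfolding X_def by (rule Xev_sets)
  have int: "integrable M (indicator (G S \<inter> X S) :: 'a \<Rightarrow> real)" if "S \<in> Pow V" for S
    using G_sets Xs that by (intro integrable_real_indicator) (auto simp: less_top[symmetric])
  have "AE \<omega> in M. real_cond_exp M (F_stop M N \<Lambda> t) (\<lambda>\<omega>. \<Sum>S\<in>Pow V. indicator (G S \<inter> X S) \<omega>) \<omega>
        = (\<Sum>S\<in>Pow V. real_cond_exp M (F_stop M N \<Lambda> t) (indicator (G S \<inter> X S)) \<omega>)"
  proof -
    define f where "f S = (if S \<in> Pow V then indicator (G S \<inter> X S) else (\<lambda>_. 0 :: real))" for S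
    have "AE \<omega> in M. real_cond_exp M (F_stop M N \<Lambda> t) (\<lambda>\<omega>. \<Sum>S\<in>Pow V. f S \<omega>) \<omega>
        = (\<Sum>S\<in>Pow V. real_cond_exp M (F_stop M N \<Lambda> t) (f S) \<omega>)"
      by (rule fs.real_cond_exp_sum) (auto simp: f_def int)
    moreover have "(\<lambda>\<omega>. \<Sum>S\<in>Pow V. f S \<omega>) = (\<lambda>\<omega>. \<Sum>S\<in>Pow V. indicator (G S \<inter> X S) \<omega>)"
      by (auto simp: f_def fun_eq_iff intro!: sum.cong)
    moreover have "(\<Sum>S\<in>Pow V. real_cond_exp M (F_stop M N \<Lambda> t) (f S) \<omega>) = (\<Sum>S\<in>Pow V. real_cond_exp M (F_stop M N \<Lambda> t) (indicator (G S \<inter> X S)) \<omega>)" for \<omega>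
      by (rule sum.cong) (auto simp: f_def)
    ultimately show ?thesis by simp
  qed
  moreover have "AE \<omega> in M. \<forall>S\<in>Pow V. real_cond_exp M (F_stop M N \<Lambda> t) (indicator (G S \<inter> X S)) \<omega> = prob (X S) * indicator (G S) \<omega>"
  proof (rule AE_finite_allI)
    fix S assume "S \<in> Pow V"
    then show "AE \<omega> in M. real_cond_exp M (F_stop M N \<Lambda> t) (indicator (G S \<inter> X S)) \<omega> = prob (X S) * indicator (G S) \<omega>"
      unfolding X_def by (intro CE) simp
  qed simp
  moreover have "AE \<omega> in M. \<omega> \<in> space M" by (rule AE_space)
  ultimately have "AE \<omega> in M. real_cond_exp M (F_stop M N \<Lambda> t) (indicator E) \<omega> = p_event M N \<Lambda> t k (Vstar N \<Lambda> t \<omega>)"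
  proof eventually_elim
    case (elim \<omega>)
    have "real_cond_exp M (F_stop M N \<Lambda> t) (indicator E) \<omega> = (\<Sum>S\<in>Pow V. prob (X S) * indicator (G S) \<omega>)"
      unfolding ind using elim(1,2) by simp
    also have "\<dots> = prob (X (Vstar N \<Lambda> t \<omega>))" by (rule cond_sum_single[OF elim(3)])
    finally show ?case by (simp add: pS)
  qed
  then show ?thesis unfolding E_def .
qed

end



lemma pois_conv:
  "(\<Sum>i\<le>n. poisson_prob a i * poisson_prob c (n - i)) = poisson_prob (a + c) n"
proof -
  have "poisson_prob (a + c) n = exp (- (a + c)) * (\<Sum>i\<le>n. of_nat (n choose i) * a ^ i * c ^ (n - i)) / fact n"
    unfolding poisson_prob_def binomial_ring ..
  also have "\<dots> = (\<Sum>i\<le>n. exp (- (a + c)) * (of_nat (n choose i) * a ^ i * c ^ (n - i)) / fact n)"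
    by (simp add: sum_distrib_left sum_divide_distrib)
  also have "\<dots> = (\<Sum>i\<le>n. poisson_prob a i * poisson_prob c (n - i))"
  proof (rule sum.cong[OF refl])
    fix i assume "i \<in> {..n}"
    then have i: "i \<le> n" by simp
    have "exp (- (a + c)) * (of_nat (n choose i) * a ^ i * c ^ (n - i)) / fact n
        = exp (- (a + c)) * (fact n / (fact i * fact (n - i)) * a ^ i * c ^ (n - i)) / fact n"
      by (simp add: binomial_fact[OF i])
    also have "\<dots> = (exp (- a) * a ^ i / fact i) * (exp (- c) * c ^ (n - i) / fact (n - i))"
      by (simp add: exp_add[symmetric] field_simps)
    finally show "exp (- (a + c)) * (of_nat (n choose i) * a ^ i * c ^ (n - i)) / fact n = poisson_prob a i * poisson_prob c (n - i)"
      unfolding poisson_prob_def .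
  qed
  finally show ?thesis by simp
qed

lemma pois_zero: "poisson_prob 0 n = (if n = 0 then 1 else 0)"
  unfolding poisson_prob_def by simp

context hyp begin

definition "Zv B \<omega> = \<Lambda> t \<omega> B"

lemma indep_Z: "indep_vars (\<lambda>_. count_space UNIV) Zv (Pow V)"
proof -
  have "indep_vars (\<lambda>_. count_space UNIV) (\<lambda>i x. (\<lambda>f. f t) (Pth i x)) (Pow V)"
    by (rule indep_vars_compose2[OF indep_paths]) (rule measurable_component_singleton, use tpos in simp)
  moreover have "(\<lambda>x. (\<lambda>f. f t) (Pth i x)) = Zv i" for i
    using tpos by (auto simp: Pth_def Zv_def fun_eq_iff)
  ultimately show ?thesis by simp
qed

lemma Zv_meas: "B \<subseteq> V \<Longrightarrow> Zv B \<in> measurable M (count_space UNIV)"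
  unfolding Zv_def using meas_comp tpos by simp

lemma sumZ_meas: "F \<subseteq> Pow V \<Longrightarrow> (\<lambda>\<omega>. \<Sum>B\<in>F. Zv B \<omega>) \<in> measurable M (count_space UNIV)"
proof -
  assume F: "F \<subseteq> Pow V"
  have fin: "finite F" using F finite_subset by (metis finite_Pow_iff finite_atLeastAtMost)
  have "(\<lambda>\<omega>. restrict (\<lambda>B. Zv B \<omega>) F) \<in> measurable M (PiM F (\<lambda>_. count_space (UNIV::nat set)))"
    by (rule measurable_restrict) (rule Zv_meas, use F in blast)
  moreover have "(\<lambda>f. \<Sum>B\<in>F. f B) \<in> measurable (PiM F (\<lambda>_. count_space (UNIV::nat set))) (count_space UNIV)"
    by (rule finite_count_measurable[OF fin])
  ultimately have "(\<lambda>\<omega>. \<Sum>B\<in>F. restrict (\<lambda>B. Zv B \<omega>) F B) \<in> measurable M (count_space UNIV)"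
    by (rule measurable_compose)
  then show ?thesis by simp
qed

lemma sumZ_ev: "F \<subseteq> Pow V \<Longrightarrow> {\<omega>\<in>space M. (\<Sum>B\<in>F. Zv B \<omega>) = n} \<in> sets M"
proof -
  assume F: "F \<subseteq> Pow V"
  have "(\<lambda>\<omega>. \<Sum>B\<in>F. Zv B \<omega>) -` {n} \<inter> space M \<in> sets M"
    by (rule measurable_sets[OF sumZ_meas[OF F]]) simp
  moreover have "(\<lambda>\<omega>. \<Sum>B\<in>F. Zv B \<omega>) -` {n} \<inter> space M = {\<omega>\<in>space M. (\<Sum>B\<in>F. Zv B \<omega>) = n}" by auto
  ultimately show ?thesis by simp
qed

lemma sum_pois:
  assumes F: "F \<subseteq> Pow V"
  shows "prob {\<omega>\<in>space M. (\<Sum>B\<in>F. Zv B \<omega>) = n} = poisson_prob (\<Sum>B\<in>F. hyper_rate N \<rho> B * t) n"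
proof -
  have fin: "finite F" using F finite_subset by (metis finite_Pow_iff finite_atLeastAtMost)
  from fin F show ?thesis
  proof (induction F arbitrary: n rule: finite_induct)
    case empty
    show ?case
    proof (cases "n = 0")
      case True then show ?thesis by (simp add: pois_zero prob_space)
    next
      case False then show ?thesis by (simp add: pois_zero)
    qed
  next
    case (insert b F)
    have bV: "b \<subseteq> V" and FV: "F \<subseteq> Pow V" using insert.prems by auto
    have iv: "indep_var (PiM {b} (\<lambda>_. count_space UNIV)) (\<lambda>\<omega>. restrict (\<lambda>i. Zv i \<omega>) {b})
                        (PiM F (\<lambda>_. count_space UNIV)) (\<lambda>\<omega>. restrict (\<lambda>i. Zv i \<omega>) F)"
      by (rule indep_var_restrict[OF indep_Z]) (use insert in auto)
    have iv2: "indep_var (count_space UNIV) ((\<lambda>f. f b) \<circ> (\<lambda>\<omega>. restrict (\<lambda>i. Zv i \<omega>) {b}))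
                         (count_space UNIV) ((\<lambda>f. \<Sum>B\<in>F. f B) \<circ> (\<lambda>\<omega>. restrict (\<lambda>i. Zv i \<omega>) F))"
      by (rule indep_var_compose[OF iv]) (auto intro: finite_count_measurable insert.hyps)
    have pij: "prob {\<omega>\<in>space M. Zv b \<omega> = i \<and> (\<Sum>B\<in>F. Zv B \<omega>) = j} = prob {\<omega>\<in>space M. Zv b \<omega> = i} * prob {\<omega>\<in>space M. (\<Sum>B\<in>F. Zv B \<omega>) = j}" for i j
    proof -
      have "prob ((\<lambda>x. (((\<lambda>f. f b) \<circ> (\<lambda>\<omega>. restrict (\<lambda>i. Zv i \<omega>) {b})) x, ((\<lambda>f. \<Sum>B\<in>F. f B) \<circ> (\<lambda>\<omega>. restrict (\<lambda>i. Zv i \<omega>) F)) x)) -` ({i} \<times> {j}) \<inter> space M)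
          = prob (((\<lambda>f. f b) \<circ> (\<lambda>\<omega>. restrict (\<lambda>i. Zv i \<omega>) {b})) -` {i} \<inter> space M) * prob (((\<lambda>f. \<Sum>B\<in>F. f B) \<circ> (\<lambda>\<omega>. restrict (\<lambda>i. Zv i \<omega>) F)) -` {j} \<inter> space M)"
        by (rule indep_varD[OF iv2]) auto
      moreover have "(\<lambda>x. (((\<lambda>f. f b) \<circ> (\<lambda>\<omega>. restrict (\<lambda>i. Zv i \<omega>) {b})) x, ((\<lambda>f. \<Sum>B\<in>F. f B) \<circ> (\<lambda>\<omega>. restrict (\<lambda>i. Zv i \<omega>) F)) x)) -` ({i} \<times> {j}) \<inter> space M
          = {\<omega>\<in>space M. Zv b \<omega> = i \<and> (\<Sum>B\<in>F. Zv B \<omega>) = j}" by auto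
      moreover have "((\<lambda>f. f b) \<circ> (\<lambda>\<omega>. restrict (\<lambda>i. Zv i \<omega>) {b})) -` {i} \<inter> space M = {\<omega>\<in>space M. Zv b \<omega> = i}" by auto
      moreover have "((\<lambda>f. \<Sum>B\<in>F. f B) \<circ> (\<lambda>\<omega>. restrict (\<lambda>i. Zv i \<omega>) F)) -` {j} \<inter> space M = {\<omega>\<in>space M. (\<Sum>B\<in>F. Zv B \<omega>) = j}" by auto
      ultimately show ?thesis by simp
    qed
    have evs: "{\<omega>\<in>space M. Zv b \<omega> = i \<and> (\<Sum>B\<in>F. Zv B \<omega>) = j} \<in> sets M" for i j
    proof -
      have "{\<omega>\<in>space M. Zv b \<omega> = i} \<in> sets M" using sumZ_ev[of "{b}" i] bV by simp
      then have "{\<omega>\<in>space M. Zv b \<omega> = i} \<inter> {\<omega>\<in>space M. (\<Sum>B\<in>F. Zv B \<omega>) = j} \<in> sets M"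
        using sumZ_ev[OF FV, of j] by auto
      moreover have "{\<omega>\<in>space M. Zv b \<omega> = i} \<inter> {\<omega>\<in>space M. (\<Sum>B\<in>F. Zv B \<omega>) = j} = {\<omega>\<in>space M. Zv b \<omega> = i \<and> (\<Sum>B\<in>F. Zv B \<omega>) = j}" by auto
      ultimately show ?thesis by simp
    qed
    have "{\<omega>\<in>space M. (\<Sum>B\<in>insert b F. Zv B \<omega>) = n} = (\<Union>i\<in>{..n}. {\<omega>\<in>space M. Zv b \<omega> = i \<and> (\<Sum>B\<in>F. Zv B \<omega>) = n - i})"
      using insert.hyps by auto
    then have "prob {\<omega>\<in>space M. (\<Sum>B\<in>insert b F. Zv B \<omega>) = n} = (\<Sum>i\<in>{..n}. prob {\<omega>\<in>space M. Zv b \<omega> = i \<and> (\<Sum>B\<in>F. Zv B \<omega>) = n - i})"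
      by (simp only:) (rule measure_finite_Union, auto simp: evs disjoint_family_on_def)
    also have "\<dots> = (\<Sum>i\<in>{..n}. poisson_prob (hyper_rate N \<rho> b * t) i * poisson_prob (\<Sum>B\<in>F. hyper_rate N \<rho> B * t) (n - i))"
      using pij insert.IH[OF FV] pois[OF bV] by (simp add: Zv_def)
    also have "\<dots> = poisson_prob (\<Sum>B\<in>insert b F. hyper_rate N \<rho> B * t) n"
      using insert.hyps by (simp add: pois_conv)
    finally show ?case .
  qed
qed

lemma joint_pois:
  assumes D: "finite D" and fib: "\<And>A. A \<in> D \<Longrightarrow> fib A \<subseteq> Pow V" and dj: "disjoint_family_on fib D"
  shows "prob {\<omega>\<in>space M. \<forall>A\<in>D. (\<Sum>B\<in>fib A. Zv B \<omega>) = k A} = (\<Prod>A\<in>D. poisson_prob (\<Sum>B\<in>fib A. hyper_rate N \<rho> B * t) (k A))"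
proof (cases "D = {}")
  case True then show ?thesis by (simp add: prob_space)
next
  case False
  have finf: "finite (fib A)" if "A \<in> D" for A
    using fib[OF that] finite_subset by (metis finite_Pow_iff finite_atLeastAtMost)
  have iv: "indep_vars (\<lambda>A. PiM (fib A) (\<lambda>_. count_space UNIV)) (\<lambda>A \<omega>. restrict (\<lambda>i. Zv i \<omega>) (fib A)) D"
    by (rule indep_vars_restrict[OF indep_Z]) (use fib dj in auto)
  have iv2: "indep_vars (\<lambda>_. count_space UNIV) (\<lambda>A \<omega>. (\<lambda>f. \<Sum>B\<in>fib A. f B) (restrict (\<lambda>i. Zv i \<omega>) (fib A))) D"
    by (rule indep_vars_compose2[OF iv]) (rule finite_count_measurable[OF finf])
  have "prob (\<Inter>A\<in>D. (\<lambda>\<omega>. (\<lambda>f. \<Sum>B\<in>fib A. f B) (restrict (\<lambda>i. Zv i \<omega>) (fib A))) -` {k A} \<inter> space M)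
      = (\<Prod>A\<in>D. prob ((\<lambda>\<omega>. (\<lambda>f. \<Sum>B\<in>fib A. f B) (restrict (\<lambda>i. Zv i \<omega>) (fib A))) -` {k A} \<inter> space M))"
    by (rule indep_varsD[OF iv2 False D]) auto
  moreover have "(\<Inter>A\<in>D. (\<lambda>\<omega>. (\<lambda>f. \<Sum>B\<in>fib A. f B) (restrict (\<lambda>i. Zv i \<omega>) (fib A))) -` {k A} \<inter> space M)
      = {\<omega>\<in>space M. \<forall>A\<in>D. (\<Sum>B\<in>fib A. Zv B \<omega>) = k A}"
    using False by auto
  moreover have "(\<lambda>\<omega>. (\<lambda>f. \<Sum>B\<in>fib A. f B) (restrict (\<lambda>i. Zv i \<omega>) (fib A))) -` {k A} \<inter> space M
      = {\<omega>\<in>space M. (\<Sum>B\<in>fib A. Zv B \<omega>) = k A}" for A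
    by auto
  ultimately show ?thesis using sum_pois fib by simp
qed

end



lemma sum_pow_card:
  assumes "finite S"
  shows "(\<Sum>C\<in>Pow S. g (card C)) = (\<Sum>i\<le>card S. real (card S choose i) * (g i :: real))"
proof -
  have "(\<Sum>C\<in>Pow S. g (card C)) = (\<Sum>i\<in>{..card S}. \<Sum>C\<in>{C. C \<in> Pow S \<and> card C = i}. g (card C))"
    by (rule sum.group[symmetric]) (use assms card_mono in auto)
  also have "\<dots> = (\<Sum>i\<le>card S. real (card S choose i) * g i)"
  proof (rule sum.cong[OF refl])
    fix i
    have "(\<Sum>C\<in>{C. C \<in> Pow S \<and> card C = i}. g (card C)) = (\<Sum>C\<in>{C. C \<subseteq> S \<and> card C = i}. g i)"
      by (rule sum.cong) auto
    also have "\<dots> = real (card {C. C \<subseteq> S \<and> card C = i}) * g i" by simp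
    also have "\<dots> = real (card S choose i) * g i" using n_subsets[OF assms] by simp
    finally show "(\<Sum>C\<in>{C. C \<in> Pow S \<and> card C = i}. g (card C)) = real (card S choose i) * g i" .
  qed
  finally show ?thesis .
qed

lemma rate_eq:
  assumes S: "S \<subseteq> {1..N}" and A: "A \<subseteq> {1..N} - S" and j: "2 \<le> card A"
  shows "(\<Sum>B\<in>{B. B \<subseteq> {1..N} \<and> A \<subseteq> B \<and> B - S = A}. hyper_rate N \<rho> B * t)
       = real (N - card S) * beta_coef N \<rho> t (card S) (card A) / real ((N - card S) choose card A)"
proof -
  let ?m = "card S" and ?j = "card A"
  have finS: "finite S" using S finite_subset by blast
  have finA: "finite A" using A finite_subset by blast
  have AS: "A \<inter> S = {}" using A by auto
  have cardVS: "card ({1..N} - S) = N - ?m" using S finS by (simp add: card_Diff_subset)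
  have jle: "?j \<le> N - ?m" using card_mono[OF _ A] cardVS by simp
  have mlt: "?m < N" using jle j by linarith
  have fibeq: "{B. B \<subseteq> {1..N} \<and> A \<subseteq> B \<and> B - S = A} = (\<lambda>C. A \<union> C) ` Pow S"
  proof
    show "{B. B \<subseteq> {1..N} \<and> A \<subseteq> B \<and> B - S = A} \<subseteq> (\<lambda>C. A \<union> C) ` Pow S"
    proof
      fix B assume "B \<in> {B. B \<subseteq> {1..N} \<and> A \<subseteq> B \<and> B - S = A}"
      then have "B = A \<union> (B \<inter> S)" "B \<inter> S \<in> Pow S" by auto
      then show "B \<in> (\<lambda>C. A \<union> C) ` Pow S" by blast
    qed
    show "(\<lambda>C. A \<union> C) ` Pow S \<subseteq> {B. B \<subseteq> {1..N} \<and> A \<subseteq> B \<and> B - S = A}"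
      using A S by auto
  qed
  have inj: "inj_on (\<lambda>C. A \<union> C) (Pow S)"
    by (rule inj_onI) (use AS in auto)
  have cardU: "card (A \<union> C) = ?j + card C" if "C \<in> Pow S" for C
    using that AS finA finS finite_subset[of C S] by (subst card_Un_disjoint) auto
  have "(\<Sum>B\<in>{B. B \<subseteq> {1..N} \<and> A \<subseteq> B \<and> B - S = A}. hyper_rate N \<rho> B * t)
      = (\<Sum>C\<in>Pow S. hyper_rate N \<rho> (A \<union> C) * t)"
    unfolding fibeq by (rule sum.reindex[OF inj, unfolded comp_def])
  also have "\<dots> = (\<Sum>C\<in>Pow S. (\<lambda>i. real N * \<rho> (?j + i) / real (N choose (?j + i)) * t) (card C))"
    by (rule sum.cong) (auto simp: hyper_rate_def cardU)
  also have "\<dots> = (\<Sum>i\<le>?m. real (?m choose i) * (real N * \<rho> (?j + i) / real (N choose (?j + i)) * t))"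
    by (rule sum_pow_card[OF finS])
  also have "\<dots> = t * real N * (\<Sum>i\<le>?m. \<rho> (i + ?j) * real (?m choose i) / real (N choose (?j + i)))"
    by (simp add: sum_distrib_left algebra_simps)
  also have "(\<Sum>i\<le>?m. \<rho> (i + ?j) * real (?m choose i) / real (N choose (?j + i))) = (\<Sum>i. \<rho> (i + ?j) * real (?m choose i) / real (N choose (?j + i)))"
    by (rule suminf_finite[symmetric]) auto
  finally have lhs: "(\<Sum>B\<in>{B. B \<subseteq> {1..N} \<and> A \<subseteq> B \<and> B - S = A}. hyper_rate N \<rho> B * t)
      = t * real N * (\<Sum>i. \<rho> (i + ?j) * real (?m choose i) / real (N choose (?j + i)))" .
  have c0: "real ((N - ?m) choose ?j) \<noteq> 0" using jle by simp
  have j1: "?j \<noteq> 1" using j by simp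
  have Npos: "real N > 0" and Nm: "real N - real ?m > 0" using mlt by auto
  have e1: "1 - real ?m / real N = (real N - real ?m) / real N" using Npos by (simp add: field_simps)
  show ?thesis unfolding lhs beta_coef_def using j1 c0 Npos Nm mlt
    by (simp add: e1 of_nat_diff field_simps)
qed

context hyp begin

lemma Xev_sets_gen: "finite I \<Longrightarrow> I \<subseteq> Pow V \<Longrightarrow> {\<omega>\<in>space M. (\<lambda>A\<in>I. \<Lambda> t \<omega> A) \<in> e} \<in> sets M"
proof -
  assume I: "finite I" "I \<subseteq> Pow V"
  let ?MN = "PiM I (\<lambda>_. count_space (UNIV::nat set))"
  have m: "(\<lambda>\<omega>. \<lambda>A\<in>I. \<Lambda> t \<omega> A) \<in> measurable M ?MN"
    by (rule measurable_restrict) (rule meas_comp, use I tpos in auto)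
  have "e \<inter> space ?MN \<in> sets ?MN" by (rule finite_count_sets[OF I(1)]) auto
  from measurable_sets[OF m this]
  show ?thesis by (simp add: space_PiM vimage_def Int_def conj_commute)
qed

end


context hyp begin

lemma part2:
  assumes S: "S \<subseteq> V"
  shows "AE \<omega> in M. Vstar N \<Lambda> t \<omega> = S \<longrightarrow>
            real_cond_exp M (F_stop M N \<Lambda> t)
              (indicator {\<omega>\<in>space M. \<forall>A. A \<subseteq> V - S \<and> A \<noteq> {}
                                          \<longrightarrow> hproj V (\<Lambda> t \<omega>) S A = k A}) \<omega>
            = (\<Prod>A\<in>{A. A \<subseteq> V - S \<and> A \<noteq> {}}.
                 poisson_prob (real (N - card S) * beta_coef N \<rho> t (card S) (card A)
                                 / real ((N - card S) choose card A)) (k A))"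
proof -
  interpret fs: finite_measure_subalgebra M "F_stop M N \<Lambda> t"
    by unfold_locales (rule subalg)
  define D where "D = {A. A \<subseteq> V - S \<and> 2 \<le> card A}"
  define NE where "NE = {A. A \<subseteq> V - S \<and> A \<noteq> {}}"
  define fib where "fib A = {B. B \<subseteq> V \<and> A \<subseteq> B \<and> B - S = A}" for A
  define c where "c = (\<forall>v\<in>V - S. k {v} = 0)"
  define e where "e = {g. c \<and> (\<forall>A\<in>D. (\<Sum>B\<in>fib A. g B) = k A)}"
  define X where "X = {\<omega>\<in>space M. (\<lambda>B\<in>Ccal S. \<Lambda> t \<omega> B) \<in> e}"
  define E2 where "E2 = {\<omega>\<in>space M. \<forall>A. A \<subseteq> V - S \<and> A \<noteq> {} \<longrightarrow> hproj V (\<Lambda> t \<omega>) S A = k A}"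
  define \<mu> where "\<mu> A = real (N - card S) * beta_coef N \<rho> t (card S) (card A) / real ((N - card S) choose card A)" for A :: "nat set"
  have hp: "hproj V L S A = (\<Sum>B\<in>fib A. L B)" for L A unfolding hproj_def fib_def by simp
  have fibC: "fib A \<subseteq> Ccal S" if "A \<in> D" for A
  proof
    fix B assume "B \<in> fib A"
    then have "B \<subseteq> V" "B - S = A" unfolding fib_def by auto
    then show "B \<in> Ccal S" using that unfolding D_def Ccal_def by auto
  qed
  have fibP: "fib A \<subseteq> Pow V" for A unfolding fib_def by auto
  have Xeq: "X = {\<omega>\<in>space M. c \<and> (\<forall>A\<in>D. (\<Sum>B\<in>fib A. Zv B \<omega>) = k A)}"
  proof -
    have "(\<Sum>B\<in>fib A. (\<lambda>B\<in>Ccal S. \<Lambda> t \<omega> B) B) = (\<Sum>B\<in>fib A. Zv B \<omega>)" if "A \<in> D" for A \<omega>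
      by (rule sum.cong) (use fibC[OF that] in \<open>auto simp: Zv_def\<close>)
    then show ?thesis unfolding X_def e_def by auto
  qed
  have finNE: "finite NE" unfolding NE_def by (rule finite_subset[of _ "Pow V"]) auto
  have DNE: "D \<subseteq> NE" unfolding D_def NE_def by auto
  have finD: "finite D" using finNE DNE finite_subset by blast
  have NE_cases: "A \<in> D \<or> (\<exists>v\<in>V - S. A = {v})" if "A \<in> NE" for A
  proof -
    have fA: "finite A" using that unfolding NE_def by (auto intro: finite_subset)
    have "card A \<noteq> 0" using that fA unfolding NE_def by auto
    then consider "card A = 1" | "2 \<le> card A" by linarith
    then show ?thesis
    proof cases
      case 1 then obtain v where "A = {v}" by (auto simp: card_1_singleton_iff)
      then show ?thesis using that unfolding NE_def by auto
    next
      case 2 then show ?thesis using that unfolding NE_def D_def by auto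
    qed
  qed
  have mu1: "\<mu> {v} = 0" for v :: nat unfolding \<mu>_def beta_coef_def by simp
  have muD: "\<mu> A = (\<Sum>B\<in>fib A. hyper_rate N \<rho> B * t)" if "A \<in> D" for A
    unfolding \<mu>_def fib_def using rate_eq[OF S] that unfolding D_def by auto
  have PX: "prob X = (\<Prod>A\<in>NE. poisson_prob (\<mu> A) (k A))"
  proof (cases c)
    case False
    then obtain v where v: "v \<in> V - S" "k {v} \<noteq> 0" unfolding c_def by auto
    have "X = {}" using False unfolding Xeq by auto
    moreover have "(\<Prod>A\<in>NE. poisson_prob (\<mu> A) (k A)) = 0"
    proof (rule prod_zero[OF finNE])
      show "\<exists>A\<in>NE. poisson_prob (\<mu> A) (k A) = 0"
        using v by (intro bexI[of _ "{v}"]) (auto simp: mu1 pois_zero NE_def)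
    qed
    ultimately show ?thesis by simp
  next
    case True
    have dj: "disjoint_family_on fib D" unfolding disjoint_family_on_def fib_def by auto
    have "prob X = prob {\<omega>\<in>space M. \<forall>A\<in>D. (\<Sum>B\<in>fib A. Zv B \<omega>) = k A}"
      using True unfolding Xeq by simp
    also have "\<dots> = (\<Prod>A\<in>D. poisson_prob (\<Sum>B\<in>fib A. hyper_rate N \<rho> B * t) (k A))"
      by (rule joint_pois[OF finD fibP dj])
    also have "\<dots> = (\<Prod>A\<in>D. poisson_prob (\<mu> A) (k A))"
      by (rule prod.cong) (auto simp: muD)
    also have "\<dots> = (\<Prod>A\<in>NE. poisson_prob (\<mu> A) (k A))"
    proof (rule prod.mono_neutral_left[OF finNE DNE], rule ballI)
      fix A assume "A \<in> NE - D"
      then obtain v where "v \<in> V - S" "A = {v}" using NE_cases by blast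
      then show "poisson_prob (\<mu> A) (k A) = 1" using True unfolding c_def by (simp add: mu1 pois_zero)
    qed
    finally show ?thesis .
  qed
  have GE: "G S \<inter> E2 = G S \<inter> X"
  proof (intro set_eqI iffI)
    fix \<omega> assume "\<omega> \<in> G S \<inter> E2"
    then have \<omega>: "\<omega> \<in> space M" "Vstar N \<Lambda> t \<omega> = S" and h: "\<forall>A. A \<subseteq> V - S \<and> A \<noteq> {} \<longrightarrow> hproj V (\<Lambda> t \<omega>) S A = k A"
      unfolding G_def E2_def by auto
    have tm: "term_at V (\<Lambda> t \<omega>) S" using \<omega>(2) Vstar_iff by blast
    have "c" unfolding c_def
    proof
      fix v assume v: "v \<in> V - S"
      then have "hproj V (\<Lambda> t \<omega>) S {v} = k {v}" using h by auto
      then show "k {v} = 0" using tm v unfolding term_at_def by auto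
    qed
    moreover have "\<forall>A\<in>D. (\<Sum>B\<in>fib A. Zv B \<omega>) = k A"
    proof
      fix A assume "A \<in> D"
      then have "A \<subseteq> V - S \<and> A \<noteq> {}" unfolding D_def by auto
      then have "hproj V (\<Lambda> t \<omega>) S A = k A" using h by blast
      then show "(\<Sum>B\<in>fib A. Zv B \<omega>) = k A" unfolding hp Zv_def .
    qed
    ultimately show "\<omega> \<in> G S \<inter> X" unfolding Xeq using \<open>\<omega> \<in> G S \<inter> E2\<close> \<omega> by auto
  next
    fix \<omega> assume "\<omega> \<in> G S \<inter> X"
    then have \<omega>: "\<omega> \<in> space M" "Vstar N \<Lambda> t \<omega> = S" and cc: c and h: "\<forall>A\<in>D. (\<Sum>B\<in>fib A. Zv B \<omega>) = k A"
      unfolding G_def Xeq by auto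
    have tm: "term_at V (\<Lambda> t \<omega>) S" using \<omega>(2) Vstar_iff by blast
    have "hproj V (\<Lambda> t \<omega>) S A = k A" if "A \<subseteq> V - S" "A \<noteq> {}" for A
    proof -
      have "A \<in> NE" using that unfolding NE_def by auto
      then consider "A \<in> D" | v where "v \<in> V - S" "A = {v}" using NE_cases by blast
      then show ?thesis
      proof cases
        case 1 then show ?thesis using h unfolding hp Zv_def by auto
      next
        case 2 then show ?thesis using tm cc unfolding term_at_def c_def by auto
      qed
    qed
    then show "\<omega> \<in> G S \<inter> E2" using \<open>\<omega> \<in> G S \<inter> X\<close> \<omega> unfolding E2_def by auto
  qed
  have E2s: "E2 \<in> sets M"
  proof -
    define e' where "e' = {g. \<forall>A. A \<subseteq> V - S \<and> A \<noteq> {} \<longrightarrow> (\<Sum>B\<in>fib A. g B) = k A}"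
    have "E2 = {\<omega>\<in>space M. (\<lambda>A\<in>Pow V. \<Lambda> t \<omega> A) \<in> e'}"
    proof -
      have "(\<Sum>B\<in>fib A. (\<lambda>A\<in>Pow V. \<Lambda> t \<omega> A) B) = hproj V (\<Lambda> t \<omega>) S A" for A \<omega>
        unfolding hp by (rule sum.cong) (use fibP in auto)
      then show ?thesis unfolding E2_def e'_def by auto
    qed
    also have "\<dots> \<in> sets M" by (rule Xev_sets_gen) auto
    finally show ?thesis .
  qed
  have Xs: "X \<in> sets M" unfolding X_def by (rule Xev_sets[OF S])
  have Gs: "G S \<in> sets M" by (rule G_sets[OF S])
  have AE1: "AE \<omega> in M. real_cond_exp M (F_stop M N \<Lambda> t) (indicator (G S \<inter> X)) \<omega> = prob X * indicator (G S) \<omega>"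
    unfolding X_def by (rule CE[OF S])
  have prodeq: "(\<lambda>\<omega>. indicator (G S) \<omega> * indicator E2 \<omega>) = (indicator (G S \<inter> X) :: 'a \<Rightarrow> real)"
    using GE by (auto simp: fun_eq_iff indicator_def)
  have AE2: "AE \<omega> in M. real_cond_exp M (F_stop M N \<Lambda> t) (\<lambda>\<omega>. indicator (G S) \<omega> * indicator E2 \<omega>) \<omega>
      = indicator (G S) \<omega> * real_cond_exp M (F_stop M N \<Lambda> t) (indicator E2) \<omega>"
  proof (rule fs.real_cond_exp_mult)
    show "(indicator (G S) :: 'a \<Rightarrow> real) \<in> borel_measurable (F_stop M N \<Lambda> t)"
      using G_Fstop[OF S] by (rule borel_measurable_indicator)
    show "(indicator E2 :: 'a \<Rightarrow> real) \<in> borel_measurable M"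
      using E2s by (rule borel_measurable_indicator)
    show "integrable M (\<lambda>\<omega>. indicator (G S) \<omega> * (indicator E2 \<omega> :: real))"
      unfolding prodeq using Gs Xs by (intro integrable_real_indicator) (auto simp: less_top[symmetric])
  qed
  have "AE \<omega> in M. Vstar N \<Lambda> t \<omega> = S \<longrightarrow> real_cond_exp M (F_stop M N \<Lambda> t) (indicator E2) \<omega> = (\<Prod>A\<in>NE. poisson_prob (\<mu> A) (k A))"
    using AE1 AE2 AE_space
  proof eventually_elim
    case (elim \<omega>)
    show ?case
    proof
      assume "Vstar N \<Lambda> t \<omega> = S"
      then have "\<omega> \<in> G S" using elim(3) unfolding G_def by auto
      then have "real_cond_exp M (F_stop M N \<Lambda> t) (indicator E2) \<omega> = prob X"
        using elim(1,2) unfolding prodeq by simp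
      then show "real_cond_exp M (F_stop M N \<Lambda> t) (indicator E2) \<omega> = (\<Prod>A\<in>NE. poisson_prob (\<mu> A) (k A))"
        using PX by simp
    qed
  qed
  then show ?thesis unfolding E2_def NE_def \<mu>_def .
qed

end

theorem lemma3p2:
  fixes M :: "'a measure" and \<rho> :: "nat \<Rightarrow> real" and N :: nat
    and \<Lambda> :: "real \<Rightarrow> 'a \<Rightarrow> nat set \<Rightarrow> nat" and t :: real
  assumes "prob_space M"
    and "\<rho> 0 = 0" and "\<forall>j. 0 \<le> \<rho> j" and "\<rho> sums 1"
    and "summable (\<lambda>j. real j * \<rho> j)"
    and "\<rho> 1 + \<rho> 2 > 0"
    and "N \<ge> 1"
    and "poisson_hypergraph_process M N \<rho> \<Lambda>"
    and "t > 0"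
  shows "(\<forall>k :: nat set \<Rightarrow> nat. AE \<omega> in M.
            real_cond_exp M (F_stop M N \<Lambda> t)
              (indicator {\<omega>\<in>space M. \<forall>A. A \<subseteq> {1..N} \<and> card (A - Vstar N \<Lambda> t \<omega>) > 1
                                          \<longrightarrow> \<Lambda> t \<omega> A = k A}) \<omega>
            = p_event M N \<Lambda> t k (Vstar N \<Lambda> t \<omega>))
       \<and> (\<forall>S (k :: nat set \<Rightarrow> nat). S \<subseteq> {1..N} \<longrightarrow> (AE \<omega> in M. Vstar N \<Lambda> t \<omega> = S \<longrightarrow>
            real_cond_exp M (F_stop M N \<Lambda> t)
              (indicator {\<omega>\<in>space M. \<forall>A. A \<subseteq> {1..N} - S \<and> A \<noteq> {}
                                          \<longrightarrow> hproj {1..N} (\<Lambda> t \<omega>) S A = k A}) \<omega>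
            = (\<Prod>A\<in>{A. A \<subseteq> {1..N} - S \<and> A \<noteq> {}}.
                 poisson_prob (real (N - card S) * beta_coef N \<rho> t (card S) (card A)
                                 / real ((N - card S) choose card A)) (k A))))"
  proof -
  interpret hyp M N \<rho> \<Lambda> t
    by (rule hyp.intro[OF assms(1) assms(8) assms(9) assms(3)])
  show ?thesis
  proof (intro conjI allI impI)
    fix k :: "nat set \<Rightarrow> nat"
    show "AE \<omega> in M.
            real_cond_exp M (F_stop M N \<Lambda> t)
              (indicator {\<omega>\<in>space M. \<forall>A. A \<subseteq> {1..N} \<and> card (A - Vstar N \<Lambda> t \<omega>) > 1
                                          \<longrightarrow> \<Lambda> t \<omega> A = k A}) \<omega>
            = p_event M N \<Lambda> t k (Vstar N \<Lambda> t \<omega>)"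
      by (rule part1)
  next
    fix S :: "nat set" and k :: "nat set \<Rightarrow> nat"
    assume "S \<subseteq> {1..N}"
    then show "AE \<omega> in M. Vstar N \<Lambda> t \<omega> = S \<longrightarrow>
            real_cond_exp M (F_stop M N \<Lambda> t)
              (indicator {\<omega>\<in>space M. \<forall>A. A \<subseteq> {1..N} - S \<and> A \<noteq> {}
                                          \<longrightarrow> hproj {1..N} (\<Lambda> t \<omega>) S A = k A}) \<omega>
            = (\<Prod>A\<in>{A. A \<subseteq> {1..N} - S \<and> A \<noteq> {}}.
                 poisson_prob (real (N - card S) * beta_coef N \<rho> t (card S) (card A)
                                 / real ((N - card S) choose card A)) (k A))"
      by (rule part2)
  qed
qed

end
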